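(* Let $\tau>0$, $\varepsilon>0$ and $\varepsilon_{\rm w}=\varepsilon^\tau$. Then $\max_{\bar x,\bar x'\in\bar{\mathcal X}}\varsigma(Q_{\bar x},Q_{\bar x'})\le C\varepsilon_{\rm w}^m$ and $\max_{\bar x,\bar x'\in\bar{\mathcal X}}\xi(\bar x,\bar x')\le C\varepsilon_{\rm w}^m$, for some $C>0$ depending on $\mathcal M,\rho$.
   Context: $\mathcal M\subset\mathbb R^d$: $m$-dimensional smooth, compact, connected, orientable manifold without boundary with induced metric, volume $d\mathcal V$, sectional curvatures bounded by $K$, reach $R\in(0,\infty)$, injectivity radius $\ge i_0>0$; $\varepsilon\le\min\{1,K^{-1/2},i_0,R/2\}$. $\mu$ a probability measure on $\mathcal M$ with $d\mu=\rho\,d\mathcal V$, $\rho$ continuous with $0<\rho_{\min}\le\rho\le\rho_{\max}$. $\varepsilon_{\rm n}=\varepsilon^{\tau+1}$. $\bar{\mathcal X}$ is a finite set of points in $\{x+h:x\in\mathcal M,h\perp T_x\mathcal M,\|h\|<\varepsilon_{\rm n}\}$, $Q_{\bar x}$ the orthogonal projection of $\bar x$ onto $\mathcal M$. For $Q,Q'\in\mathcal M$, $\varsigma(Q,Q')=\mathbb E_{x\sim\mu}[\mathbb 1_{\{\|x-Q\|<\varepsilon_{\rm n}^{2/3},\|x-Q'\|<\varepsilon_{\rm n}^{2/3}\}}\exp(-(\|Q-x\|^2+\|Q'-x\|^2)/(2\varepsilon_{\rm w}^2))]$; $\xi(\bar x,\bar x')=\exp\big(-(\|\bar x-Q_{\bar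 x}\|^2+\|\bar x'-Q_{\bar x'}\|^2)/(2\varepsilon_{\rm w}^2)\big)\varsigma(Q_{\bar x},Q_{\bar x'})$. *)

theory Defs
  imports "HOL-Analysis.Analysis" "HOL-Probability.Probability"
begin

fun Ck_on :: "nat \<Rightarrow> 'b::euclidean_space set \<Rightarrow> ('b \<Rightarrow> 'c::real_normed_vector) \<Rightarrow> bool" where
  "Ck_on 0 U f = continuous_on U f"
| "Ck_on (Suc k) U f =
     (f differentiable_on U \<and> (\<forall>b\<in>Basis. Ck_on k U (\<lambda>x. frechet_derivative f (at x) b)))"

definition smooth_on :: "'b::euclidean_space set \<Rightarrow> ('b \<Rightarrow> 'c::real_normed_vector) \<Rightarrow> bool" where
  "smooth_on U f = (\<forall>k. Ck_on k U f)"

text \<open>A local parametrisation (chart inverse) of M: a smooth immersion of an open set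
  of R^m which is a homeomorphism onto a relatively open subset of M.\<close>
definition is_chart :: "'a::euclidean_space set \<Rightarrow> (real^'m) set \<Rightarrow> (real^'m \<Rightarrow> 'a) \<Rightarrow> bool" where
  "is_chart M U \<phi> =
     (open U \<and> smooth_on U \<phi> \<and> inj_on \<phi> U \<and>
      (\<forall>u\<in>U. inj (frechet_derivative \<phi> (at u))) \<and>
      (\<exists>V. open V \<and> \<phi> ` U = M \<inter> V) \<and>
      continuous_on (\<phi> ` U) (inv_into U \<phi>))"

definition smooth_submanifold :: "'m::finite itself \<Rightarrow> 'a::euclidean_space set \<Rightarrow> bool" where
  "smooth_submanifold _ M =
     (\<forall>p\<in>M. \<exists>U (\<phi> :: real^'m \<Rightarrow> 'a). is_chart M U \<phi> \<and> p \<in> \<phi> ` U)"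

definition orientable :: "'m::finite itself \<Rightarrow> 'a::euclidean_space set \<Rightarrow> bool" where
  "orientable _ M =
     (\<exists>A :: ((real^'m) set \<times> (real^'m \<Rightarrow> 'a)) set.
        (\<forall>(U, \<phi>)\<in>A. is_chart M U \<phi>) \<and>
        M \<subseteq> (\<Union>(U, \<phi>)\<in>A. \<phi> ` U) \<and>
        (\<forall>(U1, \<phi>1)\<in>A. \<forall>(U2, \<phi>2)\<in>A. \<forall>x\<in>U1. \<phi>1 x \<in> \<phi>2 ` U2 \<longrightarrow>
           ((inv_into U2 \<phi>2 \<circ> \<phi>1) differentiable (at x) \<and>
            det (matrix (frechet_derivative (inv_into U2 \<phi>2 \<circ> \<phi>1) (at x))) > 0)))"

definition tangent_space :: "'m::finite itself \<Rightarrow> 'a::euclidean_space set \<Rightarrow> 'a \<Rightarrow> 'a set" where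
  "tangent_space _ M x =
     {v. \<exists>U (\<phi> :: real^'m \<Rightarrow> 'a) u. is_chart M U \<phi> \<and> u \<in> U \<and> \<phi> u = x \<and>
          v \<in> range (frechet_derivative \<phi> (at u))}"

definition hausdorff_outer :: "nat \<Rightarrow> 'a::euclidean_space set \<Rightarrow> ennreal" where
  "hausdorff_outer m A =
     (SUP \<delta>\<in>{0<..}. INF S \<in> {S :: nat \<Rightarrow> 'a set. A \<subseteq> (\<Union>i. S i) \<and>
                                   (\<forall>i. bounded (S i) \<and> diameter (S i) \<le> \<delta>)}.
        (\<Sum>i. ennreal (unit_ball_vol (real m) * (diameter (S i) / 2) ^ m)))"

definition hausdorff_measure :: "nat \<Rightarrow> 'a::euclidean_space measure" where
  "hausdorff_measure m = measure_of UNIV (sets borel) (hausdorff_outer m)"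

text \<open>Riemannian volume measure of an m-dimensional embedded submanifold M
  (as a measure on the ambient space, concentrated on M).\<close>
definition volume_measure :: "'m::finite itself \<Rightarrow> 'a::euclidean_space set \<Rightarrow> 'a measure" where
  "volume_measure _ M = density (hausdorff_measure CARD('m)) (indicator M)"

definition reach :: "'a::euclidean_space set \<Rightarrow> ereal" where
  "reach M = Sup {ereal r | r. r \<ge> 0 \<and>
      (\<forall>y. infdist y M < r \<longrightarrow> (\<exists>!p. p \<in> M \<and> dist y p = infdist y M))}"

definition proj :: "'a::euclidean_space set \<Rightarrow> 'a \<Rightarrow> 'a" where
  "proj M y = (THE p. p \<in> M \<and> dist y p = infdist y M)"

definition varsigma :: "'a::euclidean_space measure \<Rightarrow> real \<Rightarrow> real \<Rightarrow> 'a \<Rightarrow> 'a \<Rightarrow> real" where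
  "varsigma \<mu> \<epsilon>n \<epsilon>w Q Q' =
     (\<integral>x. indicator {x. norm (x - Q) < \<epsilon>n powr (2/3) \<and> norm (x - Q') < \<epsilon>n powr (2/3)} x *
          exp (- ((norm (Q - x))\<^sup>2 + (norm (Q' - x))\<^sup>2) / (2 * \<epsilon>w\<^sup>2)) \<partial>\<mu>)"

definition xi :: "'a::euclidean_space set \<Rightarrow> 'a measure \<Rightarrow> real \<Rightarrow> real \<Rightarrow> 'a \<Rightarrow> 'a \<Rightarrow> real" where
  "xi M \<mu> \<epsilon>n \<epsilon>w y y' =
     exp (- ((norm (y - proj M y))\<^sup>2 + (norm (y' - proj M y'))\<^sup>2) / (2 * \<epsilon>w\<^sup>2)) *
     varsigma \<mu> \<epsilon>n \<epsilon>w (proj M y) (proj M y')"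

end

theory Submission
  imports Defs "HOL-Real_Asymp.Real_Asymp"
begin

lemma sets_H: "sets (hausdorff_measure m :: 'a::euclidean_space measure) = sets borel"
  unfolding hausdorff_measure_def
  by (metis sets.sigma_sets_eq sets_measure_of space_borel top_greatest Pow_UNIV)

lemma space_H: "space (hausdorff_measure m :: 'a::euclidean_space measure) = UNIV"
  unfolding hausdorff_measure_def by (simp add: space_measure_of_conv)

lemma emeasure_H_le: "emeasure (hausdorff_measure m) A \<le> hausdorff_outer m A"
  unfolding hausdorff_measure_def emeasure_measure_of_conv by auto

lemma ball_measure:
  fixes M :: "(real^'d) set" and \<rho> :: "real^'d \<Rightarrow> real"
  assumes "closed M" "\<forall>x\<in>M. \<rho> x \<le> \<rho>max" "closed B"
  shows "emeasure (density (volume_measure TYPE('m::finite) M) (\<lambda>x. ennreal (\<rho> x))) B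
     \<le> ennreal \<rho>max * emeasure (hausdorff_measure CARD('m)) (M \<inter> B)"
proof -
  let ?H = "hausdorff_measure CARD('m) :: (real^'d) measure"
  let ?V = "volume_measure TYPE('m) M"
  have MH: "M \<in> sets ?H" using assms(1) by (simp add: sets_H borel_closed)
  have BH: "B \<in> sets ?H" using assms(3) by (simp add: sets_H borel_closed)
  have mi: "indicator M \<in> borel_measurable ?H" using MH by simp
  have sV: "sets ?V = sets ?H" unfolding volume_measure_def by simp
  have "emeasure (density ?V (\<lambda>x. ennreal (\<rho> x))) B \<le> (\<integral>\<^sup>+x. ennreal (\<rho> x) * indicator B x \<partial>?V)"
    unfolding density_def emeasure_measure_of_conv by auto
  also have "\<dots> \<le> (\<integral>\<^sup>+x. ennreal \<rho>max * indicator B x \<partial>?V)"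
  proof (rule nn_integral_mono_AE)
    have "AE x in ?V. x \<in> M"
      unfolding volume_measure_def using mi by (subst AE_density) (auto simp: indicator_def)
    then show "AE x in ?V. ennreal (\<rho> x) * indicator B x \<le> ennreal \<rho>max * indicator B x"
      by eventually_elim (use assms(2) in \<open>auto simp: indicator_def intro: ennreal_leI\<close>)
  qed
  also have "\<dots> = ennreal \<rho>max * emeasure ?V B"
    using BH sV by (subst nn_integral_cmult_indicator) auto
  also have "emeasure ?V B = emeasure ?H (M \<inter> B)"
  proof -
    have "emeasure ?V B = (\<integral>\<^sup>+x. indicator M x * indicator B x \<partial>?H)"
      unfolding volume_measure_def using mi BH by (subst emeasure_density) auto
    also have "\<dots> = (\<integral>\<^sup>+x. indicator (M \<inter> B) x \<partial>?H)"
      by (rule nn_integral_cong) (auto simp: indicator_def)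
    also have "\<dots> = emeasure ?H (M \<inter> B)" using MH BH by (subst nn_integral_indicator) auto
    finally show ?thesis .
  qed
  finally show ?thesis .
qed

definition Ssum :: "nat \<Rightarrow> real" where
  "Ssum m = (\<Sum>j. (real j + 1) ^ m * exp (- real j / 2))"

lemma Ssum_summable: "summable (\<lambda>j. (real j + 1) ^ m * exp (- real j / 2))"
proof -
  have "((\<lambda>j. (real j + 1)^m * exp(-real j/4)) \<longlongrightarrow> 0) at_top"
    by real_asymp
  then have "eventually (\<lambda>j. (real j + 1)^m * exp(-real j/4) < 1) at_top"
    by (rule order_tendstoD) simp
  then obtain N where N: "\<And>j. j \<ge> N \<Longrightarrow> (real j + 1)^m * exp(-real j/4) < 1"
    by (auto simp: eventually_sequentially)
  have g: "summable (\<lambda>j. exp (-1/4) ^ j :: real)" by (rule summable_geometric) simp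
  show ?thesis
  proof (rule summable_comparison_test'[OF g])
    fix j assume "N \<le> j"
    then have "(real j + 1)^m * exp(-real j/4) < 1" by (rule N)
    then have A: "((real j + 1)^m * exp(-real j/4)) * exp(-real j/4) \<le> 1 * exp(-real j/4)"
      by (intro mult_right_mono) auto
    have B: "exp(-real j/4) * exp(-real j/4) = exp (- real j / 2)"
      by (simp flip: exp_add)
    have C: "exp (-1/4) ^ j = exp(-real j/4)"
      by (simp flip: exp_of_nat_mult)
    have "(real j + 1) ^ m * exp (- real j / 2) \<le> exp(-real j/4)"
      using A unfolding B[symmetric] by (simp add: mult.assoc)
    then show "norm ((real j + 1) ^ m * exp (- real j / 2)) \<le> exp (-1/4) ^ j"
      unfolding C by simp
  qed
qed

lemma Ssum_nonneg: "Ssum m \<ge> 0"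
  unfolding Ssum_def by (rule suminf_nonneg[OF Ssum_summable]) simp

lemma gauss_integral:
  fixes \<mu> :: "(real^'d) measure"
  assumes sets: "sets \<mu> = sets borel"
    and growth: "\<And>r. r > 0 \<Longrightarrow> emeasure \<mu> (cball Q r) \<le> ennreal (K * r ^ m)"
    and K: "K \<ge> 0" and w: "w > 0"
  shows "(\<integral>\<^sup>+x. ennreal (exp (- (norm (Q - x))\<^sup>2 / (2 * w\<^sup>2))) \<partial>\<mu>) \<le> ennreal (K * Ssum m * w ^ m)"
proof -
  define g where "g j x = ennreal (exp (- real j / 2)) * indicator (cball Q ((real j + 1) * w)) x" for j x
  have pt: "ennreal (exp (- (norm (Q - x))\<^sup>2 / (2 * w\<^sup>2))) \<le> (\<Sum>j. g j x)" for x
  proof -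
    define d where "d = norm (Q - x)"
    define k where "k = nat \<lfloor>d / w\<rfloor>"
    have d0: "d \<ge> 0" unfolding d_def by simp
    have k1: "real k \<le> d / w" unfolding k_def using d0 w by (simp add: of_nat_nat)
    have k2: "d / w < real k + 1" unfolding k_def using d0 w
      by (simp add: of_nat_nat)
    have "real k \<le> real k ^ 2" by (cases k) (auto simp: power2_eq_square)
    also have "\<dots> \<le> (d / w) ^ 2" using k1 by (auto intro!: power_mono)
    finally have "real k / 2 \<le> d\<^sup>2 / (2 * w\<^sup>2)" using w by (simp add: power_divide field_simps)
    then have e: "exp (- d\<^sup>2 / (2 * w\<^sup>2)) \<le> exp (- real k / 2)" by simp
    have inb: "x \<in> cball Q ((real k + 1) * w)"
      using k2 w by (simp add: dist_norm d_def field_simps)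
    have "ennreal (exp (- (norm (Q - x))\<^sup>2 / (2 * w\<^sup>2))) \<le> g k x"
      unfolding g_def using inb e by (simp add: d_def ennreal_leI)
    also have "g k x \<le> (\<Sum>j. g j x)"
      using sum_le_suminf[OF summableI, of "{k}" "\<lambda>j. g j x"] by simp
    finally show ?thesis .
  qed
  have "(\<integral>\<^sup>+x. ennreal (exp (- (norm (Q - x))\<^sup>2 / (2 * w\<^sup>2))) \<partial>\<mu>) \<le> (\<integral>\<^sup>+x. (\<Sum>j. g j x) \<partial>\<mu>)"
    by (rule nn_integral_mono) (rule pt)
  also have "\<dots> = (\<Sum>j. \<integral>\<^sup>+x. g j x \<partial>\<mu>)"
    by (rule nn_integral_suminf) (unfold g_def, subst measurable_cong_sets[OF sets refl], auto intro!: borel_measurable_times_ennreal borel_measurable_indicator simp: borel_closed)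
  also have "\<dots> = (\<Sum>j. ennreal (exp (- real j / 2)) * emeasure \<mu> (cball Q ((real j + 1) * w)))"
    unfolding g_def by (subst nn_integral_cmult_indicator) (auto simp: sets borel_closed)
  also have "\<dots> \<le> (\<Sum>j. ennreal (K * w ^ m * ((real j + 1) ^ m * exp (- real j / 2))))"
  proof (rule suminf_le[OF _ summableI summableI])
    fix j
    have "emeasure \<mu> (cball Q ((real j + 1) * w)) \<le> ennreal (K * ((real j + 1) * w) ^ m)"
      using w by (intro growth) simp
    then have "ennreal (exp (- real j / 2)) * emeasure \<mu> (cball Q ((real j + 1) * w))
        \<le> ennreal (exp (- real j / 2)) * ennreal (K * ((real j + 1) * w) ^ m)"
      by (rule mult_left_mono) simp
    also have "\<dots> = ennreal (K * w ^ m * ((real j + 1) ^ m * exp (- real j / 2)))"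
      using K w by (simp add: ennreal_mult'[symmetric] power_mult_distrib mult_ac)
    finally show "ennreal (exp (- real j / 2)) * emeasure \<mu> (cball Q ((real j + 1) * w))
        \<le> ennreal (K * w ^ m * ((real j + 1) ^ m * exp (- real j / 2)))" .
  qed
  also have "\<dots> = ennreal (\<Sum>j. K * w ^ m * ((real j + 1) ^ m * exp (- real j / 2)))"
    using K w by (intro suminf_ennreal2 summable_mult Ssum_summable) auto
  also have "(\<Sum>j. K * w ^ m * ((real j + 1) ^ m * exp (- real j / 2))) = K * Ssum m * w ^ m"
    unfolding Ssum_def by (subst suminf_mult[OF Ssum_summable]) (simp add: mult_ac)
  finally show ?thesis .
qed

lemma haus_box:
  fixes A :: "(real^'m::finite) set" and f :: "real^'m \<Rightarrow> 'a::euclidean_space"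
  assumes box: "\<And>u i. u \<in> A \<Longrightarrow> a$i \<le> u$i \<and> u$i \<le> a$i + s" and s: "s > 0" and L: "L \<ge> 0"
    and lip: "\<And>u v. u \<in> A \<Longrightarrow> v \<in> A \<Longrightarrow> dist (f u) (f v) \<le> L * dist u v"
  shows "hausdorff_outer CARD('m) (f ` A)
     \<le> ennreal (unit_ball_vol (real CARD('m)) * (L * real CARD('m) * s / 2) ^ CARD('m))"
proof -
  let ?m = "CARD('m)"
  let ?w = "unit_ball_vol (real ?m)"
  have w0: "?w \<ge> 0" by simp
  show ?thesis unfolding hausdorff_outer_def
  proof (rule SUP_least)
    fix \<delta> :: real assume "\<delta> \<in> {0<..}"
    then have \<delta>: "\<delta> > 0" by simp
    define k :: nat where "k = nat \<lceil>L * ?m * s / \<delta>\<rceil> + 1"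
    have k1: "k \<ge> 1" by (simp add: k_def)
    have "L * ?m * s / \<delta> \<le> real k" unfolding k_def by linarith
    then have "L * ?m * s \<le> real k * \<delta>" using \<delta> by (simp add: field_simps)
    then have kb: "L * ?m * s / real k \<le> \<delta>" using k1 by (simp add: field_simps)
    define t where "t = s / real k"
    have t: "t > 0" using s k1 by (simp add: t_def)
    have kt: "real k * t = s" using k1 by (simp add: t_def)
    define P where "P g = {u \<in> A. \<forall>i. a$i + real (g i) * t \<le> u$i \<and> u$i \<le> a$i + (real (g i) + 1) * t}"
      for g :: "'m \<Rightarrow> nat"
    define I where "I = (PiE UNIV (\<lambda>_::'m. {..<k}))"
    have finI: "finite I" unfolding I_def by (simp add: finite_PiE)
    define N where "N = card I"
    have cardI: "N = k ^ ?m" unfolding I_def N_def by (simp add: card_PiE)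
    obtain e where e: "bij_betw e {0..<N} I" using ex_bij_betw_nat_finite[OF finI] N_def by blast
    define S where "S n = (if n < N then f ` P (e n) else {})" for n
    have cover: "f ` A \<subseteq> (\<Union>n. S n)"
    proof
      fix y assume "y \<in> f ` A"
      then obtain u where u: "u \<in> A" "y = f u" by auto
      define g where "g i = min (k - 1) (nat \<lfloor>(u$i - a$i) / t\<rfloor>)" for i
      have gI: "g \<in> I" unfolding I_def g_def using k1 by auto
      have "u \<in> P g"
        unfolding P_def
      proof (intro CollectI conjI allI u(1))
        fix i
        define x where "x = (u$i - a$i) / t"
        have x0: "x \<ge> 0" using box[OF u(1), of i] t by (simp add: x_def)
        have ux: "u$i = a$i + x * t" using t by (simp add: x_def)
        have "real (g i) \<le> real (nat \<lfloor>x\<rfloor>)" unfolding g_def x_def by simp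
        also have "\<dots> \<le> x" using x0 by (simp add: of_nat_nat)
        finally show "a$i + real (g i) * t \<le> u$i" unfolding ux using t by simp
        show "u$i \<le> a$i + (real (g i) + 1) * t"
        proof (cases "k - 1 \<le> nat \<lfloor>x\<rfloor>")
          case True
          then have "g i = k - 1" unfolding g_def x_def by simp
          then have "(real (g i) + 1) * t = s" using k1 kt by (simp add: of_nat_diff)
          then show ?thesis using box[OF u(1), of i] by simp
        next
          case False
          then have "g i = nat \<lfloor>x\<rfloor>" unfolding g_def x_def by simp
          moreover have "x < real (nat \<lfloor>x\<rfloor>) + 1" using x0 by (simp add: of_nat_nat)
          ultimately have "x * t \<le> (real (g i) + 1) * t" using t by simp
          then show ?thesis unfolding ux by simp
        qed
      qed
      moreover obtain n where "n < N" "e n = g"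
        using gI e unfolding bij_betw_def by auto
      ultimately show "y \<in> (\<Union>n. S n)" using u by (auto simp: S_def)
    qed
    have Pd: "dist x y \<le> ?m * t" if "x \<in> P g" "y \<in> P g" for x y g
    proof -
      have "dist x y = norm (x - y)" by (simp add: dist_norm)
      also have "\<dots> \<le> (\<Sum>i\<in>UNIV. \<bar>(x - y)$i\<bar>)" by (rule norm_le_l1_cart)
      also have "\<dots> \<le> (\<Sum>i\<in>(UNIV::'m set). t)"
      proof (rule sum_mono)
        fix i
        show "\<bar>(x - y)$i\<bar> \<le> t" using that unfolding P_def
          by (auto simp: abs_if algebra_simps) (smt (verit, best))+
      qed
      finally show ?thesis by simp
    qed
    have Sd: "bounded (S n) \<and> diameter (S n) \<le> L * ?m * t" for n
    proof (cases "n < N")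
      case True
      have d: "norm (y - z) \<le> L * ?m * t" if "y \<in> S n" "z \<in> S n" for y z
      proof -
        from that True obtain x x' where "x \<in> P (e n)" "x' \<in> P (e n)" "y = f x" "z = f x'"
          by (auto simp: S_def)
        moreover have "P (e n) \<subseteq> A" by (auto simp: P_def)
        ultimately have "dist y z \<le> L * dist x x'" using lip by auto
        also have "\<dots> \<le> L * (?m * t)" using Pd[OF \<open>x \<in> _\<close> \<open>x' \<in> _\<close>] L by (intro mult_left_mono) auto
        finally show ?thesis by (simp add: dist_norm mult_ac)
      qed
      have "bounded (S n)"
      proof (cases "S n = {}")
        case False
        then obtain y0 where "y0 \<in> S n" by auto
        then have "S n \<subseteq> cball y0 (L * ?m * t)" using d by (auto simp: dist_norm)
        then show ?thesis using bounded_cball bounded_subset by blast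
      qed simp
      moreover have "diameter (S n) \<le> L * ?m * t"
        by (rule diameter_le) (use d L t in auto)
      ultimately show ?thesis by simp
    qed (use L t in \<open>simp add: S_def less_imp_le\<close>)
    have Sd': "diameter (S n) \<le> \<delta>" for n
    proof -
      have "L * ?m * t = L * ?m * s / real k" by (simp add: t_def)
      then show ?thesis using Sd[of n] kb by simp
    qed
    have "(INF S \<in> {S. f ` A \<subseteq> (\<Union>i. S i) \<and> (\<forall>i. bounded (S i) \<and> diameter (S i) \<le> \<delta>)}.
            \<Sum>i. ennreal (?w * (diameter (S i) / 2) ^ ?m))
        \<le> (\<Sum>i. ennreal (?w * (diameter (S i) / 2) ^ ?m))"
      by (rule INF_lower) (use cover Sd Sd' in auto)
    also have "\<dots> = (\<Sum>i<N. ennreal (?w * (diameter (S i) / 2) ^ ?m))"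
      by (rule suminf_finite) (auto simp: S_def)
    also have "\<dots> \<le> (\<Sum>i<N. ennreal (?w * (L * ?m * t / 2) ^ ?m))"
    proof (rule sum_mono, rule ennreal_leI, rule mult_left_mono[OF _ w0], rule power_mono)
      fix i
      show "diameter (S i) / 2 \<le> L * ?m * t / 2" using Sd[of i] by simp
      show "0 \<le> diameter (S i) / 2" using Sd[of i] diameter_ge_0 by auto
    qed
    also have "\<dots> = ennreal (real N * (?w * (L * ?m * t / 2) ^ ?m))"
      using w0 L t by (simp add: ennreal_mult ennreal_of_nat_eq_real_of_nat)
    also have "real N * (?w * (L * ?m * t / 2) ^ ?m) = ?w * (L * ?m * (real k * t) / 2) ^ ?m"
      by (simp add: cardI flip: power_mult_distrib) (simp add: mult_ac)
    also have "\<dots> = ?w * (L * ?m * s / 2) ^ ?m" using kt by simp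
    finally show "(INF S \<in> {S. f ` A \<subseteq> (\<Union>i. S i) \<and> (\<forall>i. bounded (S i) \<and> diameter (S i) \<le> \<delta>)}.
            \<Sum>i. ennreal (?w * (diameter (S i) / 2) ^ ?m)) \<le> ennreal (?w * (L * ?m * s / 2) ^ ?m)" .
  qed
qed

lemma lin_bound:
  fixes g :: "'n::euclidean_space \<Rightarrow> 'b::real_normed_vector"
  assumes "linear g"
  shows "norm (g h) \<le> norm h * (\<Sum>b\<in>Basis. norm (g b))"
proof -
  have "g h = g (\<Sum>b\<in>Basis. (h \<bullet> b) *\<^sub>R b)" by (simp add: euclidean_representation)
  also have "\<dots> = (\<Sum>b\<in>Basis. (h \<bullet> b) *\<^sub>R g b)"
    using assms by (simp add: linear_sum linear_scale)
  finally have "norm (g h) \<le> (\<Sum>b\<in>Basis. norm ((h \<bullet> b) *\<^sub>R g b))"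
    using norm_sum[of "\<lambda>b. (h \<bullet> b) *\<^sub>R g b" Basis] by simp
  also have "\<dots> \<le> (\<Sum>b\<in>Basis. norm h * norm (g b))"
    by (intro sum_mono) (simp add: Basis_le_norm mult_right_mono)
  finally show ?thesis by (simp add: sum_distrib_left)
qed

lemma chart_local:
  fixes \<phi> :: "real^'m::finite \<Rightarrow> 'a::euclidean_space"
  assumes ch: "is_chart M U \<phi>" and u0: "u0 \<in> U"
  obtains \<delta> L c where "\<delta> > 0" "c > 0" "L \<ge> 0" "cball u0 \<delta> \<subseteq> U"
    "\<And>u v. u \<in> cball u0 \<delta> \<Longrightarrow> v \<in> cball u0 \<delta> \<Longrightarrow> dist (\<phi> u) (\<phi> v) \<le> L * dist u v"
    "\<And>u v. u \<in> cball u0 \<delta> \<Longrightarrow> v \<in> cball u0 \<delta> \<Longrightarrow> c * dist u v \<le> dist (\<phi> u) (\<phi> v)"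
proof -
  define D where "D u = frechet_derivative \<phi> (at u)" for u
  have oU: "open U" and sm: "smooth_on U \<phi>" and injD: "\<And>u. u \<in> U \<Longrightarrow> inj (D u)"
    using ch unfolding is_chart_def D_def by auto
  have "Ck_on (Suc (Suc 0)) U \<phi>" using sm unfolding smooth_on_def by blast
  then have dif: "\<phi> differentiable_on U"
    and cD: "\<And>b. b \<in> Basis \<Longrightarrow> continuous_on U (\<lambda>u. D u b)"
    by (auto simp: D_def intro: differentiable_imp_continuous_on)
  have hd: "(\<phi> has_derivative D u) (at u)" if "u \<in> U" for u
    using dif that oU unfolding D_def
    by (simp add: differentiable_on_eq_differentiable_at frechet_derivative_works[symmetric])
  have linD: "linear (D u)" if "u \<in> U" for u using hd[OF that] by (rule has_derivative_linear)
  obtain B where B: "B > 0" "\<And>x. B * norm x \<le> norm (D u0 x)"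
    using linear_inj_bounded_below_pos[OF linD[OF u0] injD[OF u0]] by blast
  define \<sigma> where "\<sigma> u = (\<Sum>b\<in>Basis. norm (D u b - D u0 b))" for u
  have c\<sigma>: "continuous_on U \<sigma>" unfolding \<sigma>_def
    by (intro continuous_on_sum continuous_on_norm continuous_on_diff cD continuous_on_const)
  obtain d1 where d1: "d1 > 0" "\<And>u. u \<in> U \<Longrightarrow> dist u u0 < d1 \<Longrightarrow> dist (\<sigma> u) (\<sigma> u0) < B / 2"
  proof -
    have "B / 2 > 0" using B(1) by simp
    then show ?thesis using c\<sigma> u0 that unfolding continuous_on_iff by blast
  qed
  obtain d2 where d2: "d2 > 0" "cball u0 d2 \<subseteq> U" using oU u0 open_contains_cball by blast
  define \<delta> where "\<delta> = min (d1 / 2) d2"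
  have \<delta>: "\<delta> > 0" "cball u0 \<delta> \<subseteq> U" using d1 d2 by (auto simp: \<delta>_def)
  have \<sigma>b: "\<sigma> u \<le> B / 2" if "u \<in> cball u0 \<delta>" for u
  proof -
    have "u \<in> U" "dist u u0 < d1" using that \<delta> d1 by (auto simp: \<delta>_def dist_commute)
    then have "dist (\<sigma> u) (\<sigma> u0) < B / 2" by (rule d1(2))
    moreover have "\<sigma> u0 = 0" by (simp add: \<sigma>_def)
    ultimately show ?thesis by simp
  qed
  have hdS: "(\<phi> has_derivative D u) (at u within cball u0 \<delta>)" if "u \<in> cball u0 \<delta>" for u
    using \<delta>(2) that by (intro has_derivative_at_withinI[OF hd]) auto
  have on1: "onorm (D u - D u0) \<le> B / 2" if "u \<in> cball u0 \<delta>" for u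
  proof (rule onorm_le)
    fix x
    have "u \<in> U" using that \<delta> by auto
    then have "linear (D u - D u0)" using linD u0 by (simp add: fun_diff_def linear_compose_sub)
    then have "norm ((D u - D u0) x) \<le> norm x * (\<Sum>b\<in>Basis. norm ((D u - D u0) b))"
      by (rule lin_bound)
    also have "\<dots> = norm x * \<sigma> u" by (simp add: \<sigma>_def)
    also have "\<dots> \<le> norm x * (B / 2)" using \<sigma>b[OF that] by (rule mult_left_mono) simp_all
    finally show "norm ((D u - D u0) x) \<le> B / 2 * norm x" by (simp add: mult_ac)
  qed
  define L where "L = (\<Sum>b\<in>Basis. norm (D u0 b)) + B / 2"
  have L0: "L \<ge> 0" using B by (simp add: L_def sum_nonneg)
  have on2: "onorm (D u) \<le> L" if "u \<in> cball u0 \<delta>" for u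
  proof (rule onorm_le)
    fix x
    have "norm (D u x) \<le> norm (D u0 x) + norm ((D u - D u0) x)"
      using norm_triangle_ineq[of "D u0 x" "(D u - D u0) x"] by (simp add: fun_diff_def)
    also have "\<dots> \<le> norm x * (\<Sum>b\<in>Basis. norm (D u0 b)) + B / 2 * norm x"
    proof (rule add_mono)
      show "norm (D u0 x) \<le> norm x * (\<Sum>b\<in>Basis. norm (D u0 b))" by (rule lin_bound[OF linD[OF u0]])
      have "u \<in> U" using that \<delta> by auto
      then have "linear (D u - D u0)" using linD u0 by (simp add: fun_diff_def linear_compose_sub)
      then have "norm ((D u - D u0) x) \<le> onorm (D u - D u0) * norm x"
        by (meson onorm linear_conv_bounded_linear)
      also have "\<dots> \<le> B / 2 * norm x" by (rule mult_right_mono[OF on1[OF that]]) simp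
      finally show "norm ((D u - D u0) x) \<le> B / 2 * norm x" .
    qed
    finally show "norm (D u x) \<le> L * norm x" by (simp add: L_def algebra_simps)
  qed
  show ?thesis
  proof (rule that[OF \<delta>(1) _ L0 \<delta>(2)])
    show "B / 2 > 0" using B by simp
    fix u v assume u: "u \<in> cball u0 \<delta>" and v: "v \<in> cball u0 \<delta>"
    show "dist (\<phi> u) (\<phi> v) \<le> L * dist u v"
      using differentiable_bound[OF convex_cball hdS on2 u v] by (simp add: dist_norm)
    have seg: "v + t *\<^sub>R (u - v) \<in> cball u0 \<delta>" if "t \<in> {0..1}" for t
    proof -
      have "v + t *\<^sub>R (u - v) = (1 - t) *\<^sub>R v + t *\<^sub>R u" by (simp add: algebra_simps)
      then show ?thesis using convex_cball[of u0 \<delta>] u v that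
        unfolding convex_def by auto
    qed
    have lin: "norm (\<phi> u - \<phi> v - D u0 (u - v)) \<le> norm (u - v) * (B / 2)"
      by (rule differentiable_bound_linearization[OF seg hdS on1]) (use \<delta> in auto)
    have "B * norm (u - v) \<le> norm (D u0 (u - v))" by (rule B(2))
    also have "\<dots> \<le> norm (\<phi> u - \<phi> v) + norm (\<phi> u - \<phi> v - D u0 (u - v))"
      using norm_triangle_ineq4[of "\<phi> u - \<phi> v" "\<phi> u - \<phi> v - D u0 (u - v)"] by simp
    finally show "B / 2 * dist u v \<le> dist (\<phi> u) (\<phi> v)" using lin by (simp add: dist_norm, subst (asm) mult.commute[of "norm (u - v)"], linarith)
  qed
qed

lemma local_piece:
  fixes M :: "'a::euclidean_space set"
  assumes man: "smooth_submanifold TYPE('m::finite) M" and p: "p \<in> M"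
  shows "\<exists>(\<phi>::real^'m \<Rightarrow> 'a) u \<delta> L c \<eta>. \<delta> > 0 \<and> c > 0 \<and> L \<ge> 0 \<and> \<eta> > 0 \<and>
     continuous_on (cball u \<delta>) \<phi> \<and>
     (\<forall>u' v. u' \<in> cball u \<delta> \<longrightarrow> v \<in> cball u \<delta> \<longrightarrow>
        dist (\<phi> u') (\<phi> v) \<le> L * dist u' v \<and> c * dist u' v \<le> dist (\<phi> u') (\<phi> v)) \<and>
     M \<inter> ball p \<eta> \<subseteq> \<phi> ` cball u \<delta>"
proof -
  obtain U and \<phi> :: "real^'m \<Rightarrow> 'a" where ch: "is_chart M U \<phi>" and pU: "p \<in> \<phi> ` U"
    using man p unfolding smooth_submanifold_def by blast
  then obtain u where u: "u \<in> U" "p = \<phi> u" by auto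
  obtain \<delta> c L where \<delta>: "\<delta> > 0" "c > 0" "L \<ge> 0" "cball u \<delta> \<subseteq> U"
    and lip: "\<And>u' v. u' \<in> cball u \<delta> \<Longrightarrow> v \<in> cball u \<delta> \<Longrightarrow> dist (\<phi> u') (\<phi> v) \<le> L * dist u' v"
    and lip2: "\<And>u' v. u' \<in> cball u \<delta> \<Longrightarrow> v \<in> cball u \<delta> \<Longrightarrow> c * dist u' v \<le> dist (\<phi> u') (\<phi> v)"
    by (rule chart_local[OF ch u(1)], rule that, assumption+)
  have injU: "inj_on \<phi> U"
    using ch[unfolded is_chart_def, THEN conjunct2, THEN conjunct2, THEN conjunct1] .
  have exV: "\<exists>V. open V \<and> \<phi> ` U = M \<inter> V"
    using ch[unfolded is_chart_def, THEN conjunct2, THEN conjunct2, THEN conjunct2, THEN conjunct2, THEN conjunct1] .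
  have ci: "continuous_on (\<phi> ` U) (inv_into U \<phi>)"
    using ch[unfolded is_chart_def, THEN conjunct2, THEN conjunct2, THEN conjunct2, THEN conjunct2, THEN conjunct2] .
  obtain V where V: "open V" "\<phi> ` U = M \<inter> V" using exV by blast
  have pV: "p \<in> V" using pU V by auto
  obtain \<eta>1 where \<eta>1: "\<eta>1 > 0" "ball p \<eta>1 \<subseteq> V" using V(1) pV open_contains_ball by blast
  have ip: "inv_into U \<phi> p = u" using u injU by (simp add: inv_into_f_f)
  obtain \<eta>2 where \<eta>2: "\<eta>2 > 0"
    "\<And>q. q \<in> \<phi> ` U \<Longrightarrow> dist q p < \<eta>2 \<Longrightarrow> dist (inv_into U \<phi> q) (inv_into U \<phi> p) < \<delta>"
    using ci pU \<delta>(1) unfolding continuous_on_iff by blast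
  define \<eta> where "\<eta> = min \<eta>1 \<eta>2"
  have cont: "continuous_on (cball u \<delta>) \<phi>"
  proof -
    have "\<phi> differentiable_on U"
    proof -
      have "smooth_on U \<phi>" using ch unfolding is_chart_def by blast
      then have "Ck_on (Suc 0) U \<phi>" unfolding smooth_on_def by blast
      then show ?thesis by simp
    qed
    then have "continuous_on U \<phi>" by (rule differentiable_imp_continuous_on)
    then show ?thesis using \<delta>(4) continuous_on_subset by blast
  qed
  have sub: "M \<inter> ball p \<eta> \<subseteq> \<phi> ` cball u \<delta>"
  proof
    fix q assume q: "q \<in> M \<inter> ball p \<eta>"
    then have "q \<in> V" using \<eta>1 by (auto simp: \<eta>_def)
    then have qU: "q \<in> \<phi> ` U" using q V by auto
    have "dist q p < \<eta>2" using q by (auto simp: \<eta>_def dist_commute)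
    then have "dist (inv_into U \<phi> q) u < \<delta>" using \<eta>2(2)[OF qU] ip by simp
    then have "inv_into U \<phi> q \<in> cball u \<delta>" by (simp add: dist_commute)
    moreover have "\<phi> (inv_into U \<phi> q) = q" using qU by (simp add: f_inv_into_f)
    ultimately show "q \<in> \<phi> ` cball u \<delta>" by (metis image_eqI)
  qed
  show ?thesis
    apply (rule exI[of _ \<phi>], rule exI[of _ u], rule exI[of _ \<delta>], rule exI[of _ L], rule exI[of _ c], rule exI[of _ \<eta>])
    apply (intro conjI)
    using \<delta>(1) apply assumption
    using \<delta>(2) apply assumption
    using \<delta>(3) apply assumption
    using \<eta>1(1) \<eta>2(1) apply (simp add: \<eta>_def)
    using cont apply assumption
    using lip lip2 apply blast
    using sub apply assumption
    done
qed

lemma growth: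
  fixes M :: "(real^'d) set"
  assumes man: "smooth_submanifold TYPE('m::finite) M" and cM: "compact M"
  shows "\<exists>K\<ge>0. \<forall>Q r. r > 0 \<longrightarrow>
    emeasure (hausdorff_measure CARD('m)) (M \<inter> cball Q r) \<le> ennreal (K * r ^ CARD('m))"
proof -
  let ?m = "CARD('m)"
  let ?w = "unit_ball_vol (real ?m)"
  let ?H = "hausdorff_measure ?m :: (real^'d) measure"
  define good where "good p \<phi> u \<delta> L c \<eta> \<longleftrightarrow> \<delta> > 0 \<and> c > 0 \<and> L \<ge> 0 \<and> \<eta> > 0 \<and>
     continuous_on (cball u \<delta>) \<phi> \<and>
     (\<forall>u' v. u' \<in> cball u \<delta> \<longrightarrow> v \<in> cball u \<delta> \<longrightarrow>
        dist (\<phi> u') (\<phi> v) \<le> L * dist u' v \<and> c * dist u' v \<le> dist (\<phi> u') (\<phi> v)) \<and>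
     M \<inter> ball p \<eta> \<subseteq> \<phi> ` cball u \<delta>"
    for p and \<phi> :: "real^'m \<Rightarrow> real^'d" and u \<delta> L c \<eta>
  have ex: "\<exists>\<phi> u \<delta> L c \<eta>. good p \<phi> u \<delta> L c \<eta>" if "p \<in> M" for p
    unfolding good_def by (rule local_piece[OF man that])
  have chx: "\<forall>p\<in>M. \<exists>X. case X of (\<phi>, u, \<delta>, L, c, \<eta>) \<Rightarrow> good p \<phi> u \<delta> L c \<eta>"
    unfolding split_paired_Ex prod.case using ex by blast
  obtain f where f: "\<forall>p\<in>M. case f p of (\<phi>, u, \<delta>, L, c, \<eta>) \<Rightarrow> good p \<phi> u \<delta> L c \<eta>"
    using bchoice[OF chx] by blast
  define \<phi> where "\<phi> p = fst (f p)" for p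
  define u where "u p = fst (snd (f p))" for p
  define \<delta> where "\<delta> p = fst (snd (snd (f p)))" for p
  define L where "L p = fst (snd (snd (snd (f p))))" for p
  define c where "c p = fst (snd (snd (snd (snd (f p)))))" for p
  define \<eta> where "\<eta> p = snd (snd (snd (snd (snd (f p)))))" for p
  have P0: "good p (\<phi> p) (u p) (\<delta> p) (L p) (c p) (\<eta> p)" if "p \<in> M" for p
  proof -
    have eq: "f p = (\<phi> p, u p, \<delta> p, L p, c p, \<eta> p)"
      by (simp add: \<phi>_def u_def \<delta>_def L_def c_def \<eta>_def)
    have "case f p of (\<phi>, u, \<delta>, L, c, \<eta>) \<Rightarrow> good p \<phi> u \<delta> L c \<eta>" by (rule bspec[OF f that])
    then show ?thesis unfolding eq case_prod_conv .
  qed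
  have P: "\<delta> p > 0 \<and> c p > 0 \<and> L p \<ge> 0 \<and> \<eta> p > 0 \<and>
     continuous_on (cball (u p) (\<delta> p)) (\<phi> p) \<and>
     (\<forall>u' v. u' \<in> cball (u p) (\<delta> p) \<longrightarrow> v \<in> cball (u p) (\<delta> p) \<longrightarrow>
        dist (\<phi> p u') (\<phi> p v) \<le> L p * dist u' v \<and> c p * dist u' v \<le> dist (\<phi> p u') (\<phi> p v)) \<and>
     M \<inter> ball p (\<eta> p) \<subseteq> \<phi> p ` cball (u p) (\<delta> p)" if "p \<in> M" for p
    using P0[OF that] unfolding good_def .
  have P\<delta>: "\<delta> p > 0" if "p \<in> M" for p using P[OF that, THEN conjunct1] .
  have Pc: "c p > 0" if "p \<in> M" for p using P[OF that, THEN conjunct2,  THEN conjunct1] .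
  have PL: "L p \<ge> 0" if "p \<in> M" for p using P[OF that, THEN conjunct2, THEN conjunct2,  THEN conjunct1] .
  have P\<eta>: "\<eta> p > 0" if "p \<in> M" for p using P[OF that, THEN conjunct2, THEN conjunct2, THEN conjunct2,  THEN conjunct1] .
  have Pcont: "continuous_on (cball (u p) (\<delta> p)) (\<phi> p)" if "p \<in> M" for p
    using P[OF that, THEN conjunct2, THEN conjunct2, THEN conjunct2, THEN conjunct2,  THEN conjunct1] .
  have PP: "\<forall>u' v. u' \<in> cball (u p) (\<delta> p) \<longrightarrow> v \<in> cball (u p) (\<delta> p) \<longrightarrow>
        dist (\<phi> p u') (\<phi> p v) \<le> L p * dist u' v \<and> c p * dist u' v \<le> dist (\<phi> p u') (\<phi> p v)"
    if "p \<in> M" for p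
    using P[OF that, THEN conjunct2, THEN conjunct2, THEN conjunct2, THEN conjunct2, THEN conjunct2,  THEN conjunct1] .
  have Pcov: "M \<inter> ball p (\<eta> p) \<subseteq> \<phi> p ` cball (u p) (\<delta> p)" if "p \<in> M" for p
    using P[OF that, THEN conjunct2, THEN conjunct2, THEN conjunct2, THEN conjunct2, THEN conjunct2,  THEN conjunct2] .
  have Plip: "dist (\<phi> p u') (\<phi> p v) \<le> L p * dist u' v"
    if "p \<in> M" "u' \<in> cball (u p) (\<delta> p)" "v \<in> cball (u p) (\<delta> p)" for p u' v
    using PP[OF that(1), rule_format, OF that(2,3)] by (rule conjunct1)
  have Plip2: "c p * dist u' v \<le> dist (\<phi> p u') (\<phi> p v)"
    if "p \<in> M" "u' \<in> cball (u p) (\<delta> p)" "v \<in> cball (u p) (\<delta> p)" for p u' v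
    using PP[OF that(1), rule_format, OF that(2,3)] by (rule conjunct2)
  obtain F where F: "F \<subseteq> M" "finite F" "M \<subseteq> (\<Union>p\<in>F. ball p (\<eta> p))"
  proof -
    have cv: "M \<subseteq> (\<Union>p\<in>M. ball p (\<eta> p))"
    proof
      fix x assume x: "x \<in> M"
      then have "x \<in> ball x (\<eta> x)" using P\<eta>[OF x] by simp
      then show "x \<in> (\<Union>p\<in>M. ball p (\<eta> p))" using x by blast
    qed
    show ?thesis
      by (rule compactE_image[OF cM, of M "\<lambda>p. ball p (\<eta> p)", OF _ cv]) (simp, rule that)
  qed
  define K where "K = (\<Sum>p\<in>F. ?w * (2 * L p * ?m / c p) ^ ?m)"
  have K0: "K \<ge> 0" unfolding K_def using PL Pc F(1) by (intro sum_nonneg mult_nonneg_nonneg zero_le_power divide_nonneg_pos) auto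
  show ?thesis
  proof (rule exI[of _ K], intro conjI allI impI K0)
    fix Q :: "real^'d" and r :: real assume r: "r > 0"
    define A where "A p = cball (u p) (\<delta> p) \<inter> \<phi> p -` cball Q r" for p
    have cA: "compact (\<phi> p ` A p)" if "p \<in> F" for p
    proof -
      have pM: "p \<in> M" using that F by auto
      have "closed (A p)" unfolding A_def
        by (rule continuous_closed_preimage) (use Pcont[OF pM] in auto)
      moreover have "bounded (A p)" unfolding A_def by (meson Int_lower1 bounded_cball bounded_subset)
      ultimately have "compact (A p)" by (simp add: compact_eq_bounded_closed)
      moreover have "continuous_on (A p) (\<phi> p)"
        using Pcont[OF pM] continuous_on_subset unfolding A_def by blast
      ultimately show ?thesis by (rule compact_continuous_image[rotated])
    qed
    have cov: "M \<inter> cball Q r \<subseteq> (\<Union>p\<in>F. \<phi> p ` A p)"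
    proof
      fix x assume x: "x \<in> M \<inter> cball Q r"
      then obtain p where p: "p \<in> F" "x \<in> ball p (\<eta> p)" using F by auto
      have pM: "p \<in> M" using F p by auto
      then have "x \<in> \<phi> p ` cball (u p) (\<delta> p)" using Pcov[OF pM] x p by blast
      then obtain v where "v \<in> cball (u p) (\<delta> p)" "x = \<phi> p v" by auto
      then have "x \<in> \<phi> p ` A p" using x by (auto simp: A_def)
      then show "x \<in> (\<Union>p\<in>F. \<phi> p ` A p)" using p by auto
    qed
    have bnd: "hausdorff_outer ?m (\<phi> p ` A p) \<le> ennreal (?w * (2 * L p * ?m / c p) ^ ?m * r ^ ?m)"
      if "p \<in> F" for p
    proof -
      have pM: "p \<in> M" using that F by auto
      define v1 where "v1 = (SOME v. v \<in> A p)"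
      define a :: "real^'m" where "a = (\<chi> i. v1$i - 2 * r / c p)"
      have box: "a$i \<le> v$i \<and> v$i \<le> a$i + 4 * r / c p" if v: "v \<in> A p" for v i
      proof -
        have v1: "v1 \<in> A p" unfolding v1_def using v by (rule someI)
        have "dist (\<phi> p v) (\<phi> p v1) \<le> dist (\<phi> p v) Q + dist Q (\<phi> p v1)" by (rule dist_triangle)
        also have "\<dots> \<le> 2 * r" using v v1 by (auto simp: A_def dist_commute)
        finally have "c p * dist v v1 \<le> 2 * r" using Plip2[OF pM, of v v1] v v1 by (auto simp: A_def)
        then have "dist v v1 \<le> 2 * r / c p" using Pc[OF pM] by (simp add: field_simps)
        moreover have "\<bar>v$i - v1$i\<bar> \<le> dist v v1"
          by (metis component_le_norm_cart dist_norm vector_minus_component)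
        ultimately show ?thesis unfolding a_def by auto
      qed
      have "hausdorff_outer ?m (\<phi> p ` A p) \<le> ennreal (?w * (L p * ?m * (4 * r / c p) / 2) ^ ?m)"
        by (rule haus_box[OF box]) (use Pc[OF pM] PL[OF pM] Plip[OF pM] r in \<open>auto simp: A_def\<close>)
      also have "?w * (L p * ?m * (4 * r / c p) / 2) ^ ?m = ?w * (2 * L p * ?m / c p) ^ ?m * r ^ ?m"
      proof -
        have "L p * ?m * (4 * r / c p) / 2 = (2 * L p * ?m / c p) * r" using Pc[OF pM] by (simp add: field_simps)
        then show ?thesis by (simp only: power_mult_distrib mult.assoc)
      qed
      finally show ?thesis .
    qed
    have "emeasure ?H (M \<inter> cball Q r) \<le> emeasure ?H (\<Union>p\<in>F. \<phi> p ` A p)"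
      by (rule emeasure_mono[OF cov]) (use cA F(2) in \<open>auto simp: sets_H intro!: borel_compact\<close>)
    also have "\<dots> \<le> (\<Sum>p\<in>F. emeasure ?H (\<phi> p ` A p))"
      by (rule emeasure_subadditive_finite[OF F(2)]) (use cA in \<open>auto simp: sets_H intro!: borel_compact\<close>)
    also have "\<dots> \<le> (\<Sum>p\<in>F. ennreal (?w * (2 * L p * ?m / c p) ^ ?m * r ^ ?m))"
      by (rule sum_mono, rule order_trans[OF emeasure_H_le bnd])
    also have "\<dots> = ennreal (K * r ^ ?m)"
      unfolding K_def sum_distrib_right using PL Pc F(1) r
      by (subst sum_ennreal) (auto intro!: mult_nonneg_nonneg zero_le_power divide_nonneg_pos)
    finally show "emeasure ?H (M \<inter> cball Q r) \<le> ennreal (K * r ^ ?m)" .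
  qed
qed

lemma varsigma_bound:
  fixes \<mu> :: "(real^'d) measure"
  assumes sets: "sets \<mu> = sets borel"
    and growth: "\<And>Q r. r > 0 \<Longrightarrow> emeasure \<mu> (cball Q r) \<le> ennreal (K * r ^ m)"
    and K: "K \<ge> 0" and w: "w > 0"
  shows "varsigma \<mu> en w Q Q' \<le> K * Ssum m * w ^ m" and "0 \<le> varsigma \<mu> en w Q Q'"
proof -
  have nn: "0 \<le> K * Ssum m * w ^ m" using K w Ssum_nonneg by simp
  have le: "- ((norm (Q - x))\<^sup>2 + (norm (Q' - x))\<^sup>2) / (2 * w\<^sup>2) \<le> - (norm (Q - x))\<^sup>2 / (2 * w\<^sup>2)" for x
    using w by (intro divide_right_mono) auto
  have h1: "(\<integral>\<^sup>+x. ennreal (indicator {x. norm (x - Q) < en powr (2/3) \<and> norm (x - Q') < en powr (2/3)} x *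
          exp (- ((norm (Q - x))\<^sup>2 + (norm (Q' - x))\<^sup>2) / (2 * w\<^sup>2))) \<partial>\<mu>)
      \<le> (\<integral>\<^sup>+x. ennreal (exp (- (norm (Q - x))\<^sup>2 / (2 * w\<^sup>2))) \<partial>\<mu>)"
    by (rule nn_integral_mono) (use le in \<open>auto simp: indicator_def intro!: ennreal_leI\<close>)
  have h2: "(\<integral>\<^sup>+x. ennreal (exp (- (norm (Q - x))\<^sup>2 / (2 * w\<^sup>2))) \<partial>\<mu>) \<le> ennreal (K * Ssum m * w ^ m)"
    by (rule gauss_integral[OF sets growth K w])
  show "varsigma \<mu> en w Q Q' \<le> K * Ssum m * w ^ m"
    unfolding varsigma_def by (rule integral_real_bounded[OF nn]) (rule order_trans[OF h1 h2])
  show "0 \<le> varsigma \<mu> en w Q Q'"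
    unfolding varsigma_def by (intro integral_nonneg_AE AE_I2) (simp add: indicator_def)
qed

theorem lemma6p1:
  fixes M :: "(real^'d) set" and \<rho> :: "real^'d \<Rightarrow> real"
    and \<rho>min \<rho>max R :: real
  assumes manifold: "smooth_submanifold TYPE('m::finite) M"
    and compact: "compact M" and connected: "connected M"
    and orient: "orientable TYPE('m) M"
    and reach: "reach M = ereal R" and R_pos: "R > 0"
    and rho_cont: "continuous_on M \<rho>"
    and rho_min_pos: "0 < \<rho>min"
    and rho_bounds: "\<forall>x\<in>M. \<rho>min \<le> \<rho> x \<and> \<rho> x \<le> \<rho>max"
    and prob: "prob_space (density (volume_measure TYPE('m) M) (\<lambda>x. ennreal (\<rho> x)))"
  shows "\<exists>C>0. \<forall>\<tau> \<epsilon> Xbar. \<tau> > 0 \<longrightarrow> \<epsilon> > 0 \<longrightarrow> \<epsilon> \<le> 1 \<longrightarrow> \<epsilon> \<le> R / 2 \<longrightarrow>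
     finite Xbar \<longrightarrow>
     (\<forall>y\<in>Xbar. \<exists>x\<in>M. \<exists>h. (\<forall>v\<in>tangent_space TYPE('m) M x. h \<bullet> v = 0) \<and>
                         norm h < \<epsilon> powr (\<tau> + 1) \<and> y = x + h) \<longrightarrow>
     (\<forall>y\<in>Xbar. \<forall>y'\<in>Xbar.
        varsigma (density (volume_measure TYPE('m) M) (\<lambda>x. ennreal (\<rho> x)))
                 (\<epsilon> powr (\<tau> + 1)) (\<epsilon> powr \<tau>) (proj M y) (proj M y')
          \<le> C * (\<epsilon> powr \<tau>) ^ CARD('m) \<and>
        xi M (density (volume_measure TYPE('m) M) (\<lambda>x. ennreal (\<rho> x)))
                 (\<epsilon> powr (\<tau> + 1)) (\<epsilon> powr \<tau>) y y'
          \<le> C * (\<epsilon> powr \<tau>) ^ CARD('m))"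
proof -
  let ?m = "CARD('m)"
  let ?H = "hausdorff_measure ?m :: (real^'d) measure"
  let ?\<mu> = "density (volume_measure TYPE('m) M) (\<lambda>x. ennreal (\<rho> x))"
  obtain K where K0: "K \<ge> 0"
    and gr: "\<forall>Q r. r > 0 \<longrightarrow> emeasure ?H (M \<inter> cball Q r) \<le> ennreal (K * r ^ ?m)"
    using growth[OF manifold compact] by blast
  define K' where "K' = max \<rho>max 0 * K"
  have K'0: "K' \<ge> 0" using K0 by (simp add: K'_def)
  have sets: "sets ?\<mu> = sets borel" by (simp add: volume_measure_def sets_H)
  have g\<mu>: "emeasure ?\<mu> (cball Q r) \<le> ennreal (K' * r ^ ?m)" if r: "r > 0" for Q r
  proof -
    have "emeasure ?\<mu> (cball Q r) \<le> ennreal \<rho>max * emeasure ?H (M \<inter> cball Q r)"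
      by (rule ball_measure) (use compact_imp_closed[OF compact] rho_bounds in auto)
    also have "\<dots> \<le> ennreal (max \<rho>max 0) * ennreal (K * r ^ ?m)"
      by (intro mult_mono ennreal_leI) (use gr r in auto)
    also have "\<dots> = ennreal (max \<rho>max 0 * (K * r ^ ?m))"
      by (rule ennreal_mult[symmetric]) (use K0 r in auto)
    also have "\<dots> = ennreal (K' * r ^ ?m)" by (simp add: K'_def mult.assoc)
    finally show ?thesis .
  qed
  define C where "C = K' * Ssum ?m + 1"
  have C0: "C > 0" using K'0 Ssum_nonneg[of ?m] by (simp add: C_def add_nonneg_pos)
  show ?thesis
  proof (rule exI[of _ C], intro conjI allI impI ballI C0)
    fix \<tau> \<epsilon> :: real and Xbar :: "(real^'d) set" and y y'
    assume \<tau>: "\<tau> > 0" and \<epsilon>: "\<epsilon> > 0"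
    define w where "w = \<epsilon> powr \<tau>"
    have w: "w > 0" using \<epsilon> by (simp add: w_def)
    have vs: "varsigma ?\<mu> (\<epsilon> powr (\<tau> + 1)) w Q Q' \<le> C * w ^ ?m"
      and vs0: "0 \<le> varsigma ?\<mu> (\<epsilon> powr (\<tau> + 1)) w Q Q'" for Q Q'
    proof -
      have "varsigma ?\<mu> (\<epsilon> powr (\<tau> + 1)) w Q Q' \<le> K' * Ssum ?m * w ^ ?m"
        by (rule varsigma_bound(1)[OF sets g\<mu> K'0 w])
      also have "\<dots> \<le> C * w ^ ?m" using w by (simp add: C_def distrib_right)
      finally show "varsigma ?\<mu> (\<epsilon> powr (\<tau> + 1)) w Q Q' \<le> C * w ^ ?m" .
      show "0 \<le> varsigma ?\<mu> (\<epsilon> powr (\<tau> + 1)) w Q Q'"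
        by (rule varsigma_bound(2)[OF sets g\<mu> K'0 w])
    qed
    show "varsigma ?\<mu> (\<epsilon> powr (\<tau> + 1)) (\<epsilon> powr \<tau>) (proj M y) (proj M y') \<le> C * (\<epsilon> powr \<tau>) ^ ?m"
      using vs unfolding w_def .
    have e1: "exp (- ((norm (y - proj M y))\<^sup>2 + (norm (y' - proj M y'))\<^sup>2) / (2 * w\<^sup>2)) \<le> 1"
      using w by (simp add: divide_nonpos_pos add_nonneg_nonneg)
    have "xi M ?\<mu> (\<epsilon> powr (\<tau> + 1)) w y y'
        \<le> 1 * varsigma ?\<mu> (\<epsilon> powr (\<tau> + 1)) w (proj M y) (proj M y')"
      unfolding xi_def by (rule mult_right_mono[OF e1 vs0])
    also have "\<dots> \<le> C * w ^ ?m" using vs by simp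
    finally show "xi M ?\<mu> (\<epsilon> powr (\<tau> + 1)) (\<epsilon> powr \<tau>) y y' \<le> C * (\<epsilon> powr \<tau>) ^ ?m"
      unfolding w_def .
  qed
qed

end
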